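(* Let $(X,*,0)$ be a solid weak BCC-algebra and $a\in I(X)$. If $x,y\in B(a)$, then $x*(x*y)\in B(a)$ and $y*(y*x)\in B(a)$.
   Context: A weak BCC-algebra is a set $X$ with a binary operation $*$ and a constant $0$ satisfying, for all $x,y,z\in X$: (i) $((x*y)*(z*y))*(x*z)=0$; (ii) $x*x=0$; (iii) $x*0=x$; (iv) $x*y=y*x=0$ implies $x=y$. The relation $x\leqslant y$ iff $x*y=0$ is a partial order on $X$. Let $I(X)$ be the set of minimal elements of $X$ with respect to $\leqslant$. For $a\in I(X)$ the branch initiated by $a$ is $B(a)=\{x\in X: a\leqslant x\}$; "belonging to the same branch" means lying in a common $B(a)$. A weak BCC-algebra is called (left) solid if $(x*y)*z=(x*z)*y$ holds for all $x,y$ belonging to the same branch and all $z\in X$. *)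

theory Defs
  imports Main
begin

definition weak_BCC :: "'a set \<Rightarrow> ('a \<Rightarrow> 'a \<Rightarrow> 'a) \<Rightarrow> 'a \<Rightarrow> bool" where
  "weak_BCC X m e \<longleftrightarrow>
     e \<in> X \<and> (\<forall>x\<in>X. \<forall>y\<in>X. m x y \<in> X) \<and>
     (\<forall>x\<in>X. \<forall>y\<in>X. \<forall>z\<in>X. m (m (m x y) (m z y)) (m x z) = e) \<and>
     (\<forall>x\<in>X. m x x = e) \<and>
     (\<forall>x\<in>X. m x e = x) \<and>
     (\<forall>x\<in>X. \<forall>y\<in>X. m x y = e \<and> m y x = e \<longrightarrow> x = y)"

definition bcc_le :: "('a \<Rightarrow> 'a \<Rightarrow> 'a) \<Rightarrow> 'a \<Rightarrow> 'a \<Rightarrow> 'a \<Rightarrow> bool" where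
  "bcc_le m e x y \<longleftrightarrow> m x y = e"

definition minimal_elems :: "'a set \<Rightarrow> ('a \<Rightarrow> 'a \<Rightarrow> 'a) \<Rightarrow> 'a \<Rightarrow> 'a set" where
  "minimal_elems X m e = {a \<in> X. \<forall>x\<in>X. bcc_le m e x a \<longrightarrow> x = a}"

definition branch :: "'a set \<Rightarrow> ('a \<Rightarrow> 'a \<Rightarrow> 'a) \<Rightarrow> 'a \<Rightarrow> 'a \<Rightarrow> 'a set" where
  "branch X m e a = {x \<in> X. bcc_le m e a x}"

definition same_branch :: "'a set \<Rightarrow> ('a \<Rightarrow> 'a \<Rightarrow> 'a) \<Rightarrow> 'a \<Rightarrow> 'a \<Rightarrow> 'a \<Rightarrow> bool" where
  "same_branch X m e x y \<longleftrightarrow> (\<exists>a\<in>minimal_elems X m e. x \<in> branch X m e a \<and> y \<in> branch X m e a)"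

definition solid_weak_BCC :: "'a set \<Rightarrow> ('a \<Rightarrow> 'a \<Rightarrow> 'a) \<Rightarrow> 'a \<Rightarrow> bool" where
  "solid_weak_BCC X m e \<longleftrightarrow> weak_BCC X m e \<and>
     (\<forall>x\<in>X. \<forall>y\<in>X. \<forall>z\<in>X. same_branch X m e x y \<longrightarrow> m (m x y) z = m (m x z) y)"

end

theory Submission
  imports Defs
begin

lemma half:
  assumes S: "solid_weak_BCC X m e"
    and A: "a \<in> minimal_elems X m e"
    and x: "x \<in> branch X m e a" and y: "y \<in> branch X m e a"
  shows "m x (m x y) \<in> branch X m e a"
proof -
  have W: "weak_BCC X m e" using S by (simp add: solid_weak_BCC_def)
  have aX: "a \<in> X" using A by (simp add: minimal_elems_def)
  have xX: "x \<in> X" and ax: "m a x = e" using x by (auto simp: branch_def bcc_le_def)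
  have yX: "y \<in> X" and ay: "m a y = e" using y by (auto simp: branch_def bcc_le_def)
  have cl: "\<And>u v. u \<in> X \<Longrightarrow> v \<in> X \<Longrightarrow> m u v \<in> X" using W by (simp add: weak_BCC_def)
  have ax1: "\<And>u v w. u \<in> X \<Longrightarrow> v \<in> X \<Longrightarrow> w \<in> X \<Longrightarrow> m (m (m u v) (m w v)) (m u w) = e"
    using W by (simp add: weak_BCC_def)
  have e0: "\<And>u. u \<in> X \<Longrightarrow> m u e = u" using W by (simp add: weak_BCC_def)
  have ee: "\<And>u. u \<in> X \<Longrightarrow> m u u = e" using W by (simp add: weak_BCC_def)
  have eX: "e \<in> X" using W by (simp add: weak_BCC_def)
  have xyX: "m x y \<in> X" using cl xX yX .
  have 1: "m e (m x y) = e"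
    using ax1[OF aX yX xX] ay ax e0[OF cl[OF eX xyX]] by simp
  have sb: "same_branch X m e a a"
    using A aX ee[OF aX] by (auto simp: same_branch_def branch_def bcc_le_def)
  have 2: "m (m a a) (m x y) = m (m a (m x y)) a"
    using S aX xyX sb unfolding solid_weak_BCC_def by blast
  hence "m (m a (m x y)) a = e" using 1 ee[OF aX] by simp
  hence 3: "m a (m x y) = a" using A cl[OF aX xyX] by (auto simp: minimal_elems_def bcc_le_def)
  have "m (m (m a (m x y)) (m x (m x y))) (m a x) = e" using ax1[OF aX xyX xX] .
  hence "m a (m x (m x y)) = e" using 3 ax e0[OF cl[OF aX cl[OF xX xyX]]] by simp
  thus ?thesis using cl[OF xX xyX] by (simp add: branch_def bcc_le_def)
qed

theorem corollary3p3:
  fixes X :: "'a set" and m :: "'a \<Rightarrow> 'a \<Rightarrow> 'a" and e :: 'a and a x y :: 'a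
  assumes "solid_weak_BCC X m e"
    and "a \<in> minimal_elems X m e"
    and "x \<in> branch X m e a" and "y \<in> branch X m e a"
  shows "m x (m x y) \<in> branch X m e a \<and> m y (m y x) \<in> branch X m e a"
  using half[OF assms] half[OF assms(1,2,4,3)] by simp

end
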